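(* (Expressiveness.) The assertion language of IPPL is expressive: for every command $c$ and every assertion $B$ there is an assertion $w[\![c,B]\!]$ such that for every interpretation $I$, $\{\sigma\mid \sigma\models^I w[\![c,B]\!]\}=wp^I[\![c,B]\!]$.
   Context: IPPL: let $\mathbf{Loc}$ be a set of locations $X$, $\mathbf{Intvar}$ a set of integer variables $i$; states are $\sigma:\mathbf{Loc}\to\mathbb{Z}$, interpretations are $I:\mathbf{Intvar}\to\mathbb{Z}$. Arithmetic expressions $a::=n\mid X\mid i\mid a_0+a_1\mid a_0-a_1\mid a_0\times a_1$; Boolean expressions $b::=\mathbf{true}\mid\mathbf{false}\mid a_0=a_1\mid a_0\leq a_1\mid\neg b\mid b_0\wedge b_1\mid b_0\vee b_1$; assertions $A::=\mathbf{true}\mid\mathbf{false}\mid a_0=a_1\mid a_0\leq a_1\mid\neg A\mid A_0\wedge A_1\mid A_0\vee A_1\mid A_0\Rightarrow A_1\mid\forall i.A\mid\exists i.A$, with the usual satisfaction relation $\sigma\models^I A$. Commands: $c::=\mathbf{skip}\mid X:=a\mid c_0;c_1\mid\mathbf{if}\ b\ \mathbf{then}\ c_0\ \mathbf{else}\ c_1\mid\mathbf{while}\ b\ \mathbf{do}\ c\mid c_0\parallel c_1$ (expressions in commands contain no integer variables). Execution $\langle c,\sigma\rangle\rightarrow\sigma'$ is the least relation closed under the standard big-step rules for skip, assignment ($\sigma[X\mapsto$ value of $a$ in $\sigma]$), sequencing, conditional and while loop, together with: if there are states $\sigma'',\sigma'''$ with $\langle c_0,\sigma\rangle\rightarrow\sigma''$,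 $\langle c_1,\sigma''\rangle\rightarrow\sigma'$, $\langle c_1,\sigma\rangle\rightarrow\sigma'''$ and $\langle c_0,\sigma'''\rangle\rightarrow\sigma'$ then $\langle c_0\parallel c_1,\sigma\rangle\rightarrow\sigma'$. The weakest precondition is $wp^I[\![c,B]\!]=\{\sigma\mid$ for all $\sigma'$, if $\langle c,\sigma\rangle\rightarrow\sigma'$ then $\sigma'\models^I B\}$. *)

theory Defs
  imports Main
begin

type_synonym loc = string
type_synonym intvar = string
type_synonym state = "loc \<Rightarrow> int"
type_synonym interp = "intvar \<Rightarrow> int"

datatype aexp = N int | L loc | IV intvar
  | Plus aexp aexp | Minus aexp aexp | Times aexp aexp

datatype caexp = CN int | CL loc
  | CPlus caexp caexp | CMinus caexp caexp | CTimes caexp caexp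

datatype cbexp = CTrue | CFalse | CEq caexp caexp | CLe caexp caexp
  | CNot cbexp | CAnd cbexp cbexp | COr cbexp cbexp

datatype assn = ATrue | AFalse | AEq aexp aexp | ALe aexp aexp
  | ANot assn | AAnd assn assn | AOr assn assn | AImp assn assn
  | AForall intvar assn | AExists intvar assn

datatype com = Skip | Assign loc caexp | Seq com com
  | If cbexp com com | While cbexp com | Par com com

fun aval :: "aexp \<Rightarrow> state \<Rightarrow> interp \<Rightarrow> int" where
  "aval (N n) \<sigma> I = n"
| "aval (L X) \<sigma> I = \<sigma> X"
| "aval (IV i) \<sigma> I = I i"
| "aval (Plus a0 a1) \<sigma> I = aval a0 \<sigma> I + aval a1 \<sigma> I"
| "aval (Minus a0 a1) \<sigma> I = aval a0 \<sigma> I - aval a1 \<sigma> I"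
| "aval (Times a0 a1) \<sigma> I = aval a0 \<sigma> I * aval a1 \<sigma> I"

fun caval :: "caexp \<Rightarrow> state \<Rightarrow> int" where
  "caval (CN n) \<sigma> = n"
| "caval (CL X) \<sigma> = \<sigma> X"
| "caval (CPlus a0 a1) \<sigma> = caval a0 \<sigma> + caval a1 \<sigma>"
| "caval (CMinus a0 a1) \<sigma> = caval a0 \<sigma> - caval a1 \<sigma>"
| "caval (CTimes a0 a1) \<sigma> = caval a0 \<sigma> * caval a1 \<sigma>"

fun cbval :: "cbexp \<Rightarrow> state \<Rightarrow> bool" where
  "cbval CTrue \<sigma> = True"
| "cbval CFalse \<sigma> = False"
| "cbval (CEq a0 a1) \<sigma> = (caval a0 \<sigma> = caval a1 \<sigma>)"
| "cbval (CLe a0 a1) \<sigma> = (caval a0 \<sigma> \<le> caval a1 \<sigma>)"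
| "cbval (CNot b) \<sigma> = (\<not> cbval b \<sigma>)"
| "cbval (CAnd b0 b1) \<sigma> = (cbval b0 \<sigma> \<and> cbval b1 \<sigma>)"
| "cbval (COr b0 b1) \<sigma> = (cbval b0 \<sigma> \<or> cbval b1 \<sigma>)"

fun sat :: "state \<Rightarrow> interp \<Rightarrow> assn \<Rightarrow> bool" where
  "sat \<sigma> I ATrue = True"
| "sat \<sigma> I AFalse = False"
| "sat \<sigma> I (AEq a0 a1) = (aval a0 \<sigma> I = aval a1 \<sigma> I)"
| "sat \<sigma> I (ALe a0 a1) = (aval a0 \<sigma> I \<le> aval a1 \<sigma> I)"
| "sat \<sigma> I (ANot A) = (\<not> sat \<sigma> I A)"
| "sat \<sigma> I (AAnd A0 A1) = (sat \<sigma> I A0 \<and> sat \<sigma> I A1)"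
| "sat \<sigma> I (AOr A0 A1) = (sat \<sigma> I A0 \<or> sat \<sigma> I A1)"
| "sat \<sigma> I (AImp A0 A1) = (sat \<sigma> I A0 \<longrightarrow> sat \<sigma> I A1)"
| "sat \<sigma> I (AForall i A) = (\<forall>n. sat \<sigma> (I(i := n)) A)"
| "sat \<sigma> I (AExists i A) = (\<exists>n. sat \<sigma> (I(i := n)) A)"

inductive exec :: "com \<Rightarrow> state \<Rightarrow> state \<Rightarrow> bool" where
  Skip: "exec Skip \<sigma> \<sigma>"
| Assign: "exec (Assign X a) \<sigma> (\<sigma>(X := caval a \<sigma>))"
| Seq: "exec c0 \<sigma> \<sigma>'' \<Longrightarrow> exec c1 \<sigma>'' \<sigma>' \<Longrightarrow> exec (Seq c0 c1) \<sigma> \<sigma>'"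
| IfT: "cbval b \<sigma> \<Longrightarrow> exec c0 \<sigma> \<sigma>' \<Longrightarrow> exec (If b c0 c1) \<sigma> \<sigma>'"
| IfF: "\<not> cbval b \<sigma> \<Longrightarrow> exec c1 \<sigma> \<sigma>' \<Longrightarrow> exec (If b c0 c1) \<sigma> \<sigma>'"
| WhileF: "\<not> cbval b \<sigma> \<Longrightarrow> exec (While b c) \<sigma> \<sigma>"
| WhileT: "cbval b \<sigma> \<Longrightarrow> exec c \<sigma> \<sigma>'' \<Longrightarrow> exec (While b c) \<sigma>'' \<sigma>'
           \<Longrightarrow> exec (While b c) \<sigma> \<sigma>'"
| Par: "exec c0 \<sigma> \<sigma>'' \<Longrightarrow> exec c1 \<sigma>'' \<sigma>' \<Longrightarrow> exec c1 \<sigma> \<sigma>''' \<Longrightarrow> exec c0 \<sigma>''' \<sigma>'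
        \<Longrightarrow> exec (Par c0 c1) \<sigma> \<sigma>'"

definition wp :: "interp \<Rightarrow> com \<Rightarrow> assn \<Rightarrow> state set" where
  "wp I c B = {\<sigma>. \<forall>\<sigma>'. exec c \<sigma> \<sigma>' \<longrightarrow> sat \<sigma>' I B}"

end

theory Submission
  imports Defs "HOL-Number_Theory.Cong"
begin

fun avars :: "aexp \<Rightarrow> string set" where
  "avars (N n) = {}" | "avars (L X) = {}" | "avars (IV i) = {i}"
| "avars (Plus a b) = avars a \<union> avars b"
| "avars (Minus a b) = avars a \<union> avars b"
| "avars (Times a b) = avars a \<union> avars b"

lemma finite_avars[simp]: "finite (avars e)" by (induction e) auto

lemma aval_upd[simp]: "x \<notin> avars e \<Longrightarrow> aval e \<sigma> (I(x:=a)) = aval e \<sigma> I"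
  by (induction e) auto

definition defn :: "(state \<Rightarrow> interp \<Rightarrow> bool) \<Rightarrow> bool" where
  "defn P \<longleftrightarrow> (\<exists>A. \<forall>\<sigma> I. sat \<sigma> I A = P \<sigma> I)"

definition supp :: "nat \<Rightarrow> ((nat \<Rightarrow> int) \<Rightarrow> bool) \<Rightarrow> bool" where
  "supp n P \<longleftrightarrow> (\<forall>f g. (\<forall>i<n. f i = g i) \<longrightarrow> P f = P g)"

definition fdef :: "((nat \<Rightarrow> int) \<Rightarrow> bool) \<Rightarrow> bool" where
  "fdef P \<longleftrightarrow> (\<exists>n. supp n P) \<and> (\<forall>\<rho>. defn (\<lambda>\<sigma> I. P (\<lambda>i. aval (\<rho> i) \<sigma> I)))"

lemma suppD: "supp n P \<Longrightarrow> (\<And>i. i < n \<Longrightarrow> f i = g i) \<Longrightarrow> P f = P g"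
  unfolding supp_def by blast

lemma new_string: "finite (S :: string set) \<Longrightarrow> \<exists>z. z \<notin> S"
  using ex_new_if_finite[OF infinite_UNIV_listI] by blast

lemma supp_mono: "supp n P \<Longrightarrow> n \<le> m \<Longrightarrow> supp m P"
  unfolding supp_def by auto

lemma fdef_cong: "fdef P \<Longrightarrow> (\<And>f. P f = Q f) \<Longrightarrow> fdef Q"
proof -
  assume "fdef P" "\<And>f. P f = Q f"
  hence "P = Q" by auto
  thus ?thesis using \<open>fdef P\<close> by simp
qed

lemma fdef_not: "fdef P \<Longrightarrow> fdef (\<lambda>f. \<not> P f)"
  unfolding fdef_def defn_def supp_def
  by (metis sat.simps(5))

lemma fdef_and: "fdef P \<Longrightarrow> fdef Q \<Longrightarrow> fdef (\<lambda>f. P f \<and> Q f)"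
proof -
  assume p: "fdef P" and q: "fdef Q"
  then obtain n m where "supp n P" "supp m Q" unfolding fdef_def by blast
  hence "supp (max n m) P" "supp (max n m) Q" by (auto elim: supp_mono)
  hence "supp (max n m) (\<lambda>f. P f \<and> Q f)" unfolding supp_def by (metis (no_types, lifting) suppD)
  moreover have "defn (\<lambda>\<sigma> I. P (\<lambda>i. aval (\<rho> i) \<sigma> I) \<and> Q (\<lambda>i. aval (\<rho> i) \<sigma> I))" for \<rho>
  proof -
    obtain A B where "\<forall>\<sigma> I. sat \<sigma> I A = P (\<lambda>i. aval (\<rho> i) \<sigma> I)"
      "\<forall>\<sigma> I. sat \<sigma> I B = Q (\<lambda>i. aval (\<rho> i) \<sigma> I)"
      using p q unfolding fdef_def defn_def by blast
    thus ?thesis unfolding defn_def by (intro exI[of _ "AAnd A B"]) simp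
  qed
  ultimately show ?thesis unfolding fdef_def by blast
qed

lemma fdef_or: "fdef P \<Longrightarrow> fdef Q \<Longrightarrow> fdef (\<lambda>f. P f \<or> Q f)"
proof -
  assume "fdef P" "fdef Q"
  hence "fdef (\<lambda>f. \<not> (\<not> P f \<and> \<not> Q f))" by (intro fdef_not fdef_and)
  thus ?thesis by (rule fdef_cong) simp
qed

lemma fdef_imp: "fdef P \<Longrightarrow> fdef Q \<Longrightarrow> fdef (\<lambda>f. P f \<longrightarrow> Q f)"
proof -
  assume "fdef P" "fdef Q"
  hence "fdef (\<lambda>f. \<not> P f \<or> Q f)" by (intro fdef_not fdef_or)
  thus ?thesis by (rule fdef_cong) simp
qed

lemma fdef_const: "fdef (\<lambda>f. b)"
  unfolding fdef_def defn_def supp_def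
  by (cases b) (auto intro: exI[of _ ATrue] exI[of _ AFalse])

lemma fdef_eq01: "fdef (\<lambda>f. f 0 = f 1)"
  unfolding fdef_def defn_def
proof (intro conjI allI)
  show "\<exists>n. supp n (\<lambda>f. f 0 = f 1)" unfolding supp_def by (intro exI[of _ 2]) auto
  fix \<rho> show "\<exists>A. \<forall>\<sigma> I. sat \<sigma> I A = (aval (\<rho> 0) \<sigma> I = aval (\<rho> 1) \<sigma> I)"
    by (intro exI[of _ "AEq (\<rho> 0) (\<rho> 1)"]) simp
qed

lemma fdef_le01: "fdef (\<lambda>f. f 0 \<le> f 1)"
  unfolding fdef_def defn_def
proof (intro conjI allI)
  show "\<exists>n. supp n (\<lambda>f. f 0 \<le> f 1)" unfolding supp_def by (intro exI[of _ 2]) auto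
  fix \<rho> show "\<exists>A. \<forall>\<sigma> I. sat \<sigma> I A = (aval (\<rho> 0) \<sigma> I \<le> aval (\<rho> 1) \<sigma> I)"
    by (intro exI[of _ "ALe (\<rho> 0) (\<rho> 1)"]) simp
qed

lemma fdef_ex1: "fdef P \<Longrightarrow> fdef (\<lambda>f. \<exists>a. P (case_nat a f))"
proof -
  assume p: "fdef P"
  then obtain n where n: "supp n P" unfolding fdef_def by blast
  have sn: "supp (Suc n) P" using n by (rule supp_mono) simp
  have "supp n (\<lambda>f. \<exists>a. P (case_nat a f))"
    unfolding supp_def
  proof (intro allI impI)
    fix f g :: "nat \<Rightarrow> int" assume fg: "\<forall>i<n. f i = g i"
    have "P (case_nat a f) = P (case_nat a g)" for a
    proof -
      have "\<forall>i<Suc n. case_nat a f i = case_nat a g i"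
        using fg by (auto split: nat.split)
      thus ?thesis by (intro suppD[OF sn]) blast
    qed
    thus "(\<exists>a. P (case_nat a f)) = (\<exists>a. P (case_nat a g))" by simp
  qed
  moreover have "defn (\<lambda>\<sigma> I. \<exists>a. P (case_nat a (\<lambda>i. aval (\<rho> i) \<sigma> I)))" for \<rho>
  proof -
    have "finite (\<Union>i<n. avars (\<rho> i))" by simp
    then obtain z where z: "z \<notin> (\<Union>i<n. avars (\<rho> i))"
      using new_string by blast
    obtain A where A: "\<forall>\<sigma> I. sat \<sigma> I A = P (\<lambda>i. aval (case_nat (IV z) \<rho> i) \<sigma> I)"
      using p unfolding fdef_def defn_def by blast
    have "sat \<sigma> I (AExists z A) = (\<exists>a. P (case_nat a (\<lambda>i. aval (\<rho> i) \<sigma> I)))" for \<sigma> I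
    proof -
      have "P (\<lambda>i. aval (case_nat (IV z) \<rho> i) \<sigma> (I(z:=a))) = P (case_nat a (\<lambda>i. aval (\<rho> i) \<sigma> I))"
        for a
      proof -
        have "\<forall>i<Suc n. aval (case_nat (IV z) \<rho> i) \<sigma> (I(z:=a)) = case_nat a (\<lambda>i. aval (\<rho> i) \<sigma> I) i"
        proof (intro allI impI)
          fix i assume i: "i < Suc n"
          show "aval (case_nat (IV z) \<rho> i) \<sigma> (I(z:=a)) = case_nat a (\<lambda>i. aval (\<rho> i) \<sigma> I) i"
          proof (cases i)
            case (Suc j)
            hence "z \<notin> avars (\<rho> j)" using z i by auto
            thus ?thesis using Suc by simp
          qed simp
        qed
        thus ?thesis by (intro suppD[OF sn]) blast
      qed
      thus ?thesis using A by simp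
    qed
    thus ?thesis unfolding defn_def by blast
  qed
  ultimately show ?thesis unfolding fdef_def by blast
qed

lemma fdef_all1: "fdef P \<Longrightarrow> fdef (\<lambda>f. \<forall>a. P (case_nat a f))"
proof -
  assume "fdef P"
  hence "fdef (\<lambda>f. \<not> (\<exists>a. \<not> P (case_nat a f)))" by (intro fdef_not fdef_ex1)
  thus ?thesis by (rule fdef_cong) simp
qed

datatype tm = TC int | TV nat | TAdd tm tm | TSub tm tm | TMul tm tm

fun tev :: "tm \<Rightarrow> (nat \<Rightarrow> int) \<Rightarrow> int" where
  "tev (TC c) f = c" | "tev (TV i) f = f i"
| "tev (TAdd s t) f = tev s f + tev t f"
| "tev (TSub s t) f = tev s f - tev t f"
| "tev (TMul s t) f = tev s f * tev t f"

fun tb :: "tm \<Rightarrow> nat" where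
  "tb (TC c) = 0" | "tb (TV i) = Suc i"
| "tb (TAdd s t) = tb s + tb t"
| "tb (TSub s t) = tb s + tb t"
| "tb (TMul s t) = tb s + tb t"

lemma tev_agree: "(\<forall>i<m. f i = g i) \<Longrightarrow> tb t \<le> m \<Longrightarrow> tev t f = tev t g"
  by (induction t) auto

fun trn :: "(nat \<Rightarrow> aexp) \<Rightarrow> tm \<Rightarrow> aexp" where
  "trn \<rho> (TC c) = N c" | "trn \<rho> (TV i) = \<rho> i"
| "trn \<rho> (TAdd s t) = Plus (trn \<rho> s) (trn \<rho> t)"
| "trn \<rho> (TSub s t) = Minus (trn \<rho> s) (trn \<rho> t)"
| "trn \<rho> (TMul s t) = Times (trn \<rho> s) (trn \<rho> t)"

lemma aval_trn: "aval (trn \<rho> t) \<sigma> I = tev t (\<lambda>j. aval (\<rho> j) \<sigma> I)"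
  by (induction t) auto

lemma fdef_subst: "fdef P \<Longrightarrow> fdef (\<lambda>f. P (\<lambda>i. tev (ts i) f))"
proof -
  assume p: "fdef P"
  then obtain n where n: "supp n P" unfolding fdef_def by blast
  have "supp (\<Sum>i<n. tb (ts i)) (\<lambda>f. P (\<lambda>i. tev (ts i) f))"
    unfolding supp_def
  proof (intro allI impI)
    fix f g :: "nat \<Rightarrow> int" assume fg: "\<forall>i<(\<Sum>i<n. tb (ts i)). f i = g i"
    have "\<forall>i<n. tev (ts i) f = tev (ts i) g"
    proof (intro allI impI)
      fix i assume "i < n"
      hence "tb (ts i) \<le> (\<Sum>i<n. tb (ts i))" by (intro member_le_sum) auto
      thus "tev (ts i) f = tev (ts i) g" using fg by (intro tev_agree) auto
    qed
    thus "P (\<lambda>i. tev (ts i) f) = P (\<lambda>i. tev (ts i) g)" by (intro suppD[OF n]) blast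
  qed
  moreover have "defn (\<lambda>\<sigma> I. P (\<lambda>i. tev (ts i) (\<lambda>i. aval (\<rho> i) \<sigma> I)))" for \<rho>
  proof -
    have "defn (\<lambda>\<sigma> I. P (\<lambda>i. aval (trn \<rho> (ts i)) \<sigma> I))"
      using p[unfolded fdef_def, THEN conjunct2, rule_format, of "\<lambda>i. trn \<rho> (ts i)"] .
    thus ?thesis unfolding aval_trn .
  qed
  ultimately show ?thesis unfolding fdef_def by blast
qed

lemma fdef_eq: "fdef (\<lambda>f. tev s f = tev t f)"
  using fdef_subst[OF fdef_eq01, of "\<lambda>i. if i = 0 then s else t"] by simp

lemma fdef_le: "fdef (\<lambda>f. tev s f \<le> tev t f)"
  using fdef_subst[OF fdef_le01, of "\<lambda>i. if i = 0 then s else t"] by simp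

lemma fdef_re: "fdef P \<Longrightarrow> fdef (\<lambda>f. P (\<lambda>i. f (r i)))"
  using fdef_subst[of P "\<lambda>i. TV (r i)"] by simp

definition blk :: "nat \<Rightarrow> (nat \<Rightarrow> int) \<Rightarrow> (nat \<Rightarrow> int) \<Rightarrow> nat \<Rightarrow> int" where
  "blk k h f i = (if i < k then h i else f (i - k))"

lemma blk_Suc: "blk (Suc k) h f = blk k h (case_nat (h k) f)"
  unfolding blk_def by (auto split: nat.split simp: fun_eq_iff intro!: arg_cong[where f=f])

lemma blk_cong: "(\<forall>i<k. h i = h' i) \<Longrightarrow> blk k h f = blk k h' f"
  unfolding blk_def by auto

lemma fdef_exv: "fdef P \<Longrightarrow> fdef (\<lambda>f. \<exists>h. P (blk k h f))"
proof (induction k arbitrary: P)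
  case 0
  then show ?case by (simp add: blk_def)
next
  case (Suc k)
  have f1: "fdef (\<lambda>f. \<exists>a. (\<lambda>g. \<exists>h. P (blk k h g)) (case_nat a f))"
    using Suc by (intro fdef_ex1) blast
  have eq:  "(\<exists>h. P (blk (Suc k) h f)) = (\<exists>a h. P (blk k h (case_nat a f)))" for f
  proof
    assume "\<exists>h. P (blk (Suc k) h f)" thus "\<exists>a h. P (blk k h (case_nat a f))"
      unfolding blk_Suc by blast
  next
    assume "\<exists>a h. P (blk k h (case_nat a f))"
    then obtain a h where "P (blk k h (case_nat a f))" by blast
    moreover have "blk k h (case_nat a f) = blk (Suc k) (h(k:=a)) f"
      unfolding blk_Suc by (simp add: blk_cong)
    ultimately show "\<exists>h. P (blk (Suc k) h f)" by metis
  qed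
  show ?case by (rule fdef_cong[OF f1]) (simp add: eq)
qed

lemma fdef_allv: "fdef P \<Longrightarrow> fdef (\<lambda>f. \<forall>h. P (blk k h f))"
proof -
  assume "fdef P"
  hence "fdef (\<lambda>f. \<not> (\<exists>h. \<not> P (blk k h f)))" by (intro fdef_not fdef_exv)
  thus ?thesis by (rule fdef_cong) simp
qed

lemma fdef_ball: "(\<And>j. j < (k::nat) \<Longrightarrow> fdef (P j)) \<Longrightarrow> fdef (\<lambda>f. \<forall>j<k. P j f)"
proof (induction k)
  case 0
  then show ?case using fdef_const[of True] by simp
next
  case (Suc k)
  hence "fdef (\<lambda>f. (\<forall>j<k. P j f) \<and> P k f)" by (intro fdef_and) auto
  moreover have "((\<forall>j<k. P j f) \<and> P k f) = (\<forall>j<Suc k. P j f)" for f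
    by (metis less_Suc_eq)
  ultimately show ?case by (rule fdef_cong)
qed

lemma beta_coprime:
  fixes d :: nat
  assumes "i < j" "j \<le> m" "d = fact m"
  shows "coprime (1 + (i+1)*d) (1 + (j+1)*d)"
proof -
  let ?g = "gcd (1 + (i+1)*d) (1 + (j+1)*d)"
  have g1: "int ?g dvd int (1 + (i+1)*d)" "int ?g dvd int (1 + (j+1)*d)"
    by (simp_all only: int_dvd_int_iff gcd_dvd1 gcd_dvd2)
  have "int ?g dvd int (j+1) * int (1 + (i+1)*d) - int (i+1) * int (1 + (j+1)*d)"
    using g1 by (simp add: dvd_diff)
  also have "int (j+1) * int (1 + (i+1)*d) - int (i+1) * int (1 + (j+1)*d) = int (j - i)"
    using assms(1) by (simp add: algebra_simps of_nat_diff)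
  finally have "?g dvd j - i" by (simp only: int_dvd_int_iff)
  moreover have "j - i > 0" using assms by simp
  ultimately have "?g \<le> j - i" by (simp add: dvd_imp_le)
  hence "?g \<le> m" using assms by simp
  moreover have "?g \<ge> 1" by (simp add: Suc_leI)
  ultimately have "?g dvd fact m" by (simp add: dvd_fact)
  hence "?g dvd (i+1)*d" using assms by simp
  moreover have "?g dvd 1 + (i+1)*d" by simp
  ultimately have "?g dvd 1" by (metis dvd_add_left_iff)
  thus ?thesis by (simp add: coprime_iff_gcd_eq_1)
qed

lemma beta_nat:
  fixes a :: "nat \<Rightarrow> nat"
  shows "\<exists>c d. \<forall>i<M. a i = c mod (1 + (i+1)*d)"
proof -
  define m where "m = M + (\<Sum>i<M. a i)"
  define d where "d = (fact m :: nat)"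
  have cop: "\<forall>i\<in>{..<M}. \<forall>j\<in>{..<M}. i \<noteq> j \<longrightarrow> coprime (1 + (i+1)*d) (1 + (j+1)*d)"
  proof (intro ballI impI)
    fix i j assume "i \<in> {..<M}" "j \<in> {..<M}" "i \<noteq> j"
    hence le: "i \<le> m" "j \<le> m" by (auto simp: m_def)
    show "coprime (1 + (i+1)*d) (1 + (j+1)*d)"
    proof (cases "i < j")
      case True thus ?thesis using beta_coprime le d_def by blast
    next
      case False hence "j < i" using \<open>i \<noteq> j\<close> by simp
      thus ?thesis using beta_coprime le d_def by (metis coprime_commute)
    qed
  qed
  obtain c where c: "\<forall>i\<in>{..<M}. [c = a i] (mod (1 + (i+1)*d))"
    using chinese_remainder_nat[OF _ cop] by blast
  have "\<forall>i<M. a i = c mod (1 + (i+1)*d)"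
  proof (intro allI impI)
    fix i assume i: "i < M"
    have "a i \<le> (\<Sum>i<M. a i)" using i by (intro member_le_sum) auto
    hence "a i \<le> m" by (simp add: m_def)
    also have "m \<le> d" unfolding d_def by (rule fact_ge_self)
    also have "d < 1 + (i+1)*d" by simp
    finally have "a i < 1 + (i+1)*d" .
    moreover have "[c = a i] (mod (1 + (i+1)*d))" using c i by simp
    ultimately show "a i = c mod (1 + (i+1)*d)" by (simp add: cong_def)
  qed
  thus ?thesis by blast
qed

fun locc :: "caexp \<Rightarrow> string set" where
  "locc (CN n) = {}" | "locc (CL X) = {X}"
| "locc (CPlus a b) = locc a \<union> locc b"
| "locc (CMinus a b) = locc a \<union> locc b"
| "locc (CTimes a b) = locc a \<union> locc b"

fun locb :: "cbexp \<Rightarrow> string set" where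
  "locb CTrue = {}" | "locb CFalse = {}"
| "locb (CEq a b) = locc a \<union> locc b"
| "locb (CLe a b) = locc a \<union> locc b"
| "locb (CNot b) = locb b"
| "locb (CAnd a b) = locb a \<union> locb b"
| "locb (COr a b) = locb a \<union> locb b"

fun locs :: "com \<Rightarrow> string set" where
  "locs Skip = {}" | "locs (Assign X a) = {X} \<union> locc a"
| "locs (Seq c d) = locs c \<union> locs d"
| "locs (If b c d) = locb b \<union> locs c \<union> locs d"
| "locs (While b c) = locb b \<union> locs c"
| "locs (Par c d) = locs c \<union> locs d"

lemma finite_locs: "finite (locs c)"
proof -
  have "finite (locc a)" for a by (induction a) auto
  moreover have "finite (locb b)" for b by (induction b) (auto simp: calculation)
  ultimately show ?thesis by (induction c) auto
qed

lemma caval_agree: "locc a \<subseteq> S \<Longrightarrow> (\<forall>X\<in>S. \<tau> X = \<sigma> X) \<Longrightarrow> caval a \<tau> = caval a \<sigma>"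
  by (induction a) auto

lemma cbval_agree: "locb b \<subseteq> S \<Longrightarrow> (\<forall>X\<in>S. \<tau> X = \<sigma> X) \<Longrightarrow> cbval b \<tau> = cbval b \<sigma>"
proof (induction b)
  case (CEq a0 a1)
  then show ?case using caval_agree[of a0 S \<tau> \<sigma>] caval_agree[of a1 S \<tau> \<sigma>] by simp
next
  case (CLe a0 a1)
  then show ?case using caval_agree[of a0 S \<tau> \<sigma>] caval_agree[of a1 S \<tau> \<sigma>] by simp
qed auto

lemma exec_frame: "exec c \<sigma> \<sigma>' \<Longrightarrow> X \<notin> locs c \<Longrightarrow> \<sigma>' X = \<sigma> X"
  by (induction rule: exec.induct) auto

lemma exec_local:
  "exec c \<sigma> \<sigma>' \<Longrightarrow> locs c \<subseteq> S \<Longrightarrow> (\<forall>X\<in>S. \<tau> X = \<sigma> X)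
   \<Longrightarrow> exec c \<tau> (\<lambda>X. if X \<in> S then \<sigma>' X else \<tau> X)"
proof (induction arbitrary: \<tau> rule: exec.induct)
  case (Skip \<sigma>)
  have "(\<lambda>X. if X \<in> S then \<sigma> X else \<tau> X) = \<tau>" using Skip by (simp add: fun_eq_iff)
  then show ?case by (simp add: exec.Skip)
next
  case (Assign X a \<sigma>)
  have "caval a \<tau> = caval a \<sigma>" using Assign by (intro caval_agree[of a S]) auto
  hence "(\<lambda>Y. if Y \<in> S then (\<sigma>(X := caval a \<sigma>)) Y else \<tau> Y) = \<tau>(X := caval a \<tau>)"
    using Assign by (auto simp: fun_eq_iff)
  then show ?case by (simp add: exec.Assign)
next
  case (Seq c0 \<sigma> \<sigma>'' c1 \<sigma>')
  let ?m = "\<lambda>X. if X \<in> S then \<sigma>'' X else \<tau> X"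
  have e1: "exec c0 \<tau> ?m" using Seq.prems by (intro Seq.IH(1)) simp_all
  have e2: "exec c1 ?m (\<lambda>X. if X \<in> S then \<sigma>' X else ?m X)" using Seq.prems by (intro Seq.IH(2)) simp_all
  have eq: "(\<lambda>X. if X \<in> S then \<sigma>' X else ?m X) = (\<lambda>X. if X \<in> S then \<sigma>' X else \<tau> X)" by (simp add: fun_eq_iff)
  show ?case using exec.Seq[OF e1 e2] eq by simp
next
  case (IfT b \<sigma> c0 \<sigma>' c1)
  have "cbval b \<tau>" using IfT.hyps(1) IfT.prems cbval_agree[of b S \<tau> \<sigma>] by simp
  moreover have "exec c0 \<tau> (\<lambda>X. if X \<in> S then \<sigma>' X else \<tau> X)" using IfT.prems by (intro IfT.IH) simp_all
  ultimately show ?case by (rule exec.IfT)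
next
  case (IfF b \<sigma> c1 \<sigma>' c0)
  have "\<not> cbval b \<tau>" using IfF.hyps(1) IfF.prems cbval_agree[of b S \<tau> \<sigma>] by simp
  moreover have "exec c1 \<tau> (\<lambda>X. if X \<in> S then \<sigma>' X else \<tau> X)" using IfF.prems by (intro IfF.IH) simp_all
  ultimately show ?case by (rule exec.IfF)
next
  case (WhileF b \<sigma> c)
  have "\<not> cbval b \<tau>" using WhileF cbval_agree[of b S \<tau> \<sigma>] by simp
  moreover have "(\<lambda>X. if X \<in> S then \<sigma> X else \<tau> X) = \<tau>" using WhileF by (simp add: fun_eq_iff)
  ultimately show ?case by (simp add: exec.WhileF)
next
  case (WhileT b \<sigma> c \<sigma>'' \<sigma>')
  let ?m = "\<lambda>X. if X \<in> S then \<sigma>'' X else \<tau> X"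
  have b: "cbval b \<tau>" using WhileT.hyps(1) WhileT.prems cbval_agree[of b S \<tau> \<sigma>] by simp
  have e1: "exec c \<tau> ?m" using WhileT.prems by (intro WhileT.IH(1)) simp_all
  have e2: "exec (While b c) ?m (\<lambda>X. if X \<in> S then \<sigma>' X else ?m X)" using WhileT.prems by (intro WhileT.IH(2)) simp_all
  have eq: "(\<lambda>X. if X \<in> S then \<sigma>' X else ?m X) = (\<lambda>X. if X \<in> S then \<sigma>' X else \<tau> X)" by (simp add: fun_eq_iff)
  show ?case using exec.WhileT[OF b e1 e2] eq by simp
next
  case (Par c0 \<sigma> \<sigma>'' c1 \<sigma>' \<sigma>''')
  let ?m = "\<lambda>X. if X \<in> S then \<sigma>'' X else \<tau> X"
  let ?m' = "\<lambda>X. if X \<in> S then \<sigma>''' X else \<tau> X"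
  have e1: "exec c0 \<tau> ?m" using Par.prems by (intro Par.IH(1)) simp_all
  have e2: "exec c1 ?m (\<lambda>X. if X \<in> S then \<sigma>' X else ?m X)" using Par.prems by (intro Par.IH(2)) simp_all
  have e3: "exec c1 \<tau> ?m'" using Par.prems by (intro Par.IH(3)) simp_all
  have e4: "exec c0 ?m' (\<lambda>X. if X \<in> S then \<sigma>' X else ?m' X)" using Par.prems by (intro Par.IH(4)) simp_all
  have eq: "(\<lambda>X. if X \<in> S then \<sigma>' X else ?m X) = (\<lambda>X. if X \<in> S then \<sigma>' X else \<tau> X)" by (simp add: fun_eq_iff)
  have eq': "(\<lambda>X. if X \<in> S then \<sigma>' X else ?m' X) = (\<lambda>X. if X \<in> S then \<sigma>' X else \<tau> X)" by (simp add: fun_eq_iff)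
  show ?case using exec.Par[OF e1 e2[unfolded eq] e3 e4[unfolded eq']] .
qed

fun pos :: "string list \<Rightarrow> string \<Rightarrow> nat" where
  "pos [] Y = 0" | "pos (X # Xs) Y = (if X = Y then 0 else Suc (pos Xs Y))"

lemma pos_lt: "X \<in> set V \<Longrightarrow> pos V X < length V"
  by (induction V) auto

lemma nth_pos: "X \<in> set V \<Longrightarrow> V ! pos V X = X"
  by (induction V) auto

lemma pos_nth: "distinct V \<Longrightarrow> i < length V \<Longrightarrow> pos V (V ! i) = i"
  by (induction V arbitrary: i) (auto simp: nth_Cons split: nat.split)

definition stu :: "state \<Rightarrow> string list \<Rightarrow> (nat \<Rightarrow> int) \<Rightarrow> state" where
  "stu \<sigma> V g X = (if X \<in> set V then g (pos V X) else \<sigma> X)"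

lemma stu_agree: "(\<forall>i<length V. g i = g' i) \<Longrightarrow> stu \<sigma> V g = stu \<sigma> V g'"
  unfolding stu_def by (auto simp: fun_eq_iff pos_lt)

lemma stu_at: "distinct V \<Longrightarrow> i < length V \<Longrightarrow> stu \<sigma> V g (V ! i) = g i"
  unfolding stu_def by (simp add: pos_nth)

lemma stu_eq: "(\<forall>X. X \<notin> set V \<longrightarrow> \<sigma> X = \<sigma>0 X) \<Longrightarrow> \<sigma> = stu \<sigma>0 V (\<lambda>i. \<sigma> (V ! i))"
  unfolding stu_def by (auto simp: fun_eq_iff nth_pos)

lemma stu_inj: "distinct V \<Longrightarrow> (stu \<sigma> V g = stu \<sigma> V g') = (\<forall>i<length V. g i = g' i)"
  by (metis stu_agree stu_at)

fun ctr :: "string list \<Rightarrow> caexp \<Rightarrow> tm" where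
  "ctr V (CN n) = TC n" | "ctr V (CL X) = TV (pos V X)"
| "ctr V (CPlus a b) = TAdd (ctr V a) (ctr V b)"
| "ctr V (CMinus a b) = TSub (ctr V a) (ctr V b)"
| "ctr V (CTimes a b) = TMul (ctr V a) (ctr V b)"

lemma tev_ctr: "locc a \<subseteq> set V \<Longrightarrow> tev (ctr V a) g = caval a (stu \<sigma> V g)"
  by (induction a) (auto simp: stu_def)

lemma fdef_cb: "locb b \<subseteq> set V \<Longrightarrow> fdef (\<lambda>g. cbval b (stu \<sigma> V g))"
proof (induction b)
  case CTrue then show ?case using fdef_const[of True] by simp
next
  case CFalse then show ?case using fdef_const[of False] by simp
next
  case (CEq a0 a1)
  show ?case by (rule fdef_cong[OF fdef_eq[of "ctr V a0" "ctr V a1"]]) (use CEq in \<open>simp add: tev_ctr[where \<sigma>=\<sigma>]\<close>)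
next
  case (CLe a0 a1)
  show ?case by (rule fdef_cong[OF fdef_le[of "ctr V a0" "ctr V a1"]]) (use CLe in \<open>simp add: tev_ctr[where \<sigma>=\<sigma>]\<close>)
next
  case (CNot b) then show ?case by (simp add: fdef_not)
next
  case (CAnd b1 b2) then show ?case by (simp add: fdef_and)
next
  case (COr b1 b2) then show ?case by (simp add: fdef_or)
qed

definition z0 :: state where "z0 = (\<lambda>_. 0)"

definition Rel :: "string list \<Rightarrow> com \<Rightarrow> (nat \<Rightarrow> int) \<Rightarrow> bool" where
  "Rel V c g = exec c (stu z0 V g) (stu z0 V (\<lambda>i. g (i + length V)))"

lemma Rel_supp: "(\<forall>i<2 * length V. g i = g' i) \<Longrightarrow> Rel V c g = Rel V c g'"
proof -
  assume a: "\<forall>i<2 * length V. g i = g' i"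
  have "stu z0 V g = stu z0 V g'" using a by (intro stu_agree) auto
  moreover have "stu z0 V (\<lambda>i. g (i + length V)) = stu z0 V (\<lambda>i. g' (i + length V))"
    using a by (intro stu_agree) auto
  ultimately show ?thesis unfolding Rel_def by simp
qed

inductive_cases SkipE: "exec Skip \<sigma> \<sigma>'"
inductive_cases AssignE: "exec (Assign X a) \<sigma> \<sigma>'"
inductive_cases SeqE: "exec (Seq c0 c1) \<sigma> \<sigma>'"
inductive_cases IfE: "exec (If b c0 c1) \<sigma> \<sigma>'"
inductive_cases ParE: "exec (Par c0 c1) \<sigma> \<sigma>'"
inductive_cases WhileE: "exec (While b c) \<sigma> \<sigma>'"

definition rcomp :: "string list \<Rightarrow> com \<Rightarrow> com \<Rightarrow> (nat \<Rightarrow> int) \<Rightarrow> bool" where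
  "rcomp V c0 c1 g = (\<exists>h. Rel V c0 (\<lambda>i. if i < length V then g i else h (i - length V))
                        \<and> Rel V c1 (\<lambda>i. if i < length V then h i else g i))"

lemma fdef_comp: "fdef (Rel V c0) \<Longrightarrow> fdef (Rel V c1) \<Longrightarrow> fdef (rcomp V c0 c1)"
proof -
  assume f0: "fdef (Rel V c0)" and f1: "fdef (Rel V c1)"
  let ?k = "length V"
  define r0 where "r0 = (\<lambda>i. if i < ?k then ?k + i else i - ?k)"
  define r1 where "r1 = (\<lambda>i. if i < ?k then i else i + ?k)"
  let ?P = "\<lambda>F. Rel V c0 (\<lambda>i. F (r0 i)) \<and> Rel V c1 (\<lambda>i. F (r1 i))"
  have "fdef ?P" by (rule fdef_and[OF fdef_re[OF f0] fdef_re[OF f1]])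
  hence fe: "fdef (\<lambda>g. \<exists>h. ?P (blk ?k h g))" by (rule fdef_exv)
  have "(\<exists>h. ?P (blk ?k h g)) = rcomp V c0 c1 g" for g
  proof -
    have "?P (blk ?k h g) = (Rel V c0 (\<lambda>i. if i < ?k then g i else h (i - ?k))
                        \<and> Rel V c1 (\<lambda>i. if i < ?k then h i else g i))" for h
    proof -
      have a: "\<forall>i<2 * ?k. blk ?k h g (r0 i) = (if i < ?k then g i else h (i - ?k))"
        unfolding blk_def r0_def by auto
      have b: "\<forall>i<2 * ?k. blk ?k h g (r1 i) = (if i < ?k then h i else g i)"
        unfolding blk_def r1_def by simp
      show ?thesis using Rel_supp[OF a] Rel_supp[OF b] by simp
    qed
    thus ?thesis unfolding rcomp_def by simp
  qed
  thus ?thesis using fe fdef_cong by blast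
qed

lemma comp_iff:
  assumes "locs c0 \<subseteq> set V" "distinct V"
  shows "rcomp V c0 c1 g = (\<exists>\<sigma>''. exec c0 (stu z0 V g) \<sigma>'' \<and> exec c1 \<sigma>'' (stu z0 V (\<lambda>i. g (i + length V))))"
proof
  let ?k = "length V"
  assume "rcomp V c0 c1 g"
  then obtain h where h: "Rel V c0 (\<lambda>i. if i < ?k then g i else h (i - ?k))"
     "Rel V c1 (\<lambda>i. if i < ?k then h i else g i)" unfolding rcomp_def by blast
  have "stu z0 V (\<lambda>i. if i < ?k then g i else h (i - ?k)) = stu z0 V g" by (rule stu_agree) auto
  moreover have "stu z0 V (\<lambda>i. if i + ?k < ?k then g (i + ?k) else h (i + ?k - ?k)) = stu z0 V h"
    by (rule stu_agree) auto
  moreover have "stu z0 V (\<lambda>i. if i < ?k then h i else g i) = stu z0 V h" by (rule stu_agree) auto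
  moreover have "stu z0 V (\<lambda>i. if i + ?k < ?k then h (i + ?k) else g (i + ?k)) = stu z0 V (\<lambda>i. g (i + ?k))"
    by (rule stu_agree) auto
  ultimately show "\<exists>\<sigma>''. exec c0 (stu z0 V g) \<sigma>'' \<and> exec c1 \<sigma>'' (stu z0 V (\<lambda>i. g (i + length V)))"
    using h unfolding Rel_def by auto
next
  let ?k = "length V"
  assume "\<exists>\<sigma>''. exec c0 (stu z0 V g) \<sigma>'' \<and> exec c1 \<sigma>'' (stu z0 V (\<lambda>i. g (i + length V)))"
  then obtain \<sigma>'' where s: "exec c0 (stu z0 V g) \<sigma>''" "exec c1 \<sigma>'' (stu z0 V (\<lambda>i. g (i + length V)))"
    by blast
  define h where "h = (\<lambda>i. \<sigma>'' (V ! i))"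
  have "\<forall>X. X \<notin> set V \<longrightarrow> \<sigma>'' X = z0 X"
  proof (intro allI impI)
    fix X assume X: "X \<notin> set V"
    hence "X \<notin> locs c0" using assms by blast
    thus "\<sigma>'' X = z0 X" using exec_frame[OF s(1)] X by (simp add: stu_def)
  qed
  hence e: "\<sigma>'' = stu z0 V h" unfolding h_def by (rule stu_eq)
  have "stu z0 V (\<lambda>i. if i < ?k then g i else h (i - ?k)) = stu z0 V g" by (rule stu_agree) auto
  moreover have "stu z0 V (\<lambda>i. if i + ?k < ?k then g (i + ?k) else h (i + ?k - ?k)) = stu z0 V h"
    by (rule stu_agree) auto
  moreover have "stu z0 V (\<lambda>i. if i < ?k then h i else g i) = stu z0 V h" by (rule stu_agree) auto
  moreover have "stu z0 V (\<lambda>i. if i + ?k < ?k then h (i + ?k) else g (i + ?k)) = stu z0 V (\<lambda>i. g (i + ?k))"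
    by (rule stu_agree) auto
  ultimately have "Rel V c0 (\<lambda>i. if i < ?k then g i else h (i - ?k)) \<and> Rel V c1 (\<lambda>i. if i < ?k then h i else g i)"
    using s e unfolding Rel_def by simp
  thus "rcomp V c0 c1 g" unfolding rcomp_def by blast
qed

lemma exec_Skip_iff: "exec Skip \<sigma> \<sigma>' = (\<sigma>' = \<sigma>)"
  by (auto elim: SkipE intro: exec.Skip)

lemma Rel_Skip: "distinct V \<Longrightarrow> Rel V Skip g = (\<forall>i<length V. g i = g (i + length V))"
  unfolding Rel_def exec_Skip_iff by (simp add: stu_inj eq_commute)

lemma Rel_Assign:
  assumes "distinct V" "X \<in> set V" "locc a \<subseteq> set V"
  shows "Rel V (Assign X a) g =
    (\<forall>i<length V. g (i + length V) = (if i = pos V X then tev (ctr V a) g else g i))"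
proof -
  have e: "(stu z0 V g)(X := v) = stu z0 V (g(pos V X := v))" for v
    using assms by (auto simp: stu_def fun_eq_iff nth_pos) (metis nth_pos)
  have "Rel V (Assign X a) g = (stu z0 V (\<lambda>i. g (i + length V)) = stu z0 V (g(pos V X := caval a (stu z0 V g))))"
    unfolding Rel_def e[symmetric] by (auto elim: AssignE intro: exec.Assign)
  also have "\<dots> = (\<forall>i<length V. g (i + length V) = (if i = pos V X then tev (ctr V a) g else g i))"
    using assms by (simp add: stu_inj tev_ctr[where \<sigma>=z0, OF assms(3)])
  finally show ?thesis .
qed

lemma Rel_If: "Rel V (If b c0 c1) g =
   ((cbval b (stu z0 V g) \<and> Rel V c0 g) \<or> (\<not> cbval b (stu z0 V g) \<and> Rel V c1 g))"
  unfolding Rel_def by (auto elim: IfE intro: exec.IfT exec.IfF)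

lemma Rel_Seq: "distinct V \<Longrightarrow> locs c0 \<subseteq> set V \<Longrightarrow> Rel V (Seq c0 c1) g = rcomp V c0 c1 g"
  by (simp add: comp_iff Rel_def) (auto elim: SeqE intro: exec.Seq)

lemma Rel_Par: "distinct V \<Longrightarrow> locs c0 \<subseteq> set V \<Longrightarrow> locs c1 \<subseteq> set V \<Longrightarrow>
   Rel V (Par c0 c1) g = (rcomp V c0 c1 g \<and> rcomp V c1 c0 g)"
  by (simp add: comp_iff Rel_def) (auto elim: ParE intro: exec.Par)

lemma fdef_Skip: "distinct V \<Longrightarrow> fdef (Rel V Skip)"
proof -
  assume d: "distinct V"
  have "fdef (\<lambda>g. \<forall>i<length V. tev (TV i) g = tev (TV (i + length V)) g)"
    by (intro fdef_ball fdef_eq)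
  thus ?thesis by (rule fdef_cong) (simp add: Rel_Skip[OF d])
qed

lemma fdef_Assign:
  assumes "distinct V" "X \<in> set V" "locc a \<subseteq> set V"
  shows "fdef (Rel V (Assign X a))"
proof -
  have "fdef (\<lambda>g. \<forall>i<length V. tev (TV (i + length V)) g = tev (if i = pos V X then ctr V a else TV i) g)"
    by (intro fdef_ball fdef_eq)
  thus ?thesis by (rule fdef_cong) (simp add: Rel_Assign[OF assms] if_distrib)
qed

lemma while_seq1:
  "exec w \<sigma> \<sigma>' \<Longrightarrow> w = While b c \<Longrightarrow> \<exists>nn ss. ss 0 = \<sigma> \<and> ss nn = \<sigma>' \<and>
     (\<forall>i<nn. cbval b (ss i) \<and> exec c (ss i) (ss (Suc i))) \<and> \<not> cbval b (ss nn)"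
proof (induction rule: exec.induct)
  case (WhileF b' \<sigma> c')
  then show ?case by (intro exI[of _ 0] exI[of _ "\<lambda>_. \<sigma>"]) auto
next
  case (WhileT b' \<sigma> c' \<sigma>'' \<sigma>')
  then obtain nn ss where ss: "ss 0 = \<sigma>''" "ss nn = \<sigma>'"
    "\<forall>i<nn. cbval b (ss i) \<and> exec c (ss i) (ss (Suc i))" "\<not> cbval b (ss nn)" by auto
  show ?case
  proof (intro exI[of _ "Suc nn"] exI[of _ "case_nat \<sigma> ss"] conjI)
    show "\<forall>i<Suc nn. cbval b (case_nat \<sigma> ss i) \<and> exec c (case_nat \<sigma> ss i) (case_nat \<sigma> ss (Suc i))"
    proof (intro allI impI)
      fix i assume "i < Suc nn"
      thus "cbval b (case_nat \<sigma> ss i) \<and> exec c (case_nat \<sigma> ss i) (case_nat \<sigma> ss (Suc i))"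
        using ss WhileT by (cases i) auto
    qed
  qed (use ss in auto)
qed auto

lemma while_seq2:
  "ss 0 = \<sigma> \<Longrightarrow> ss nn = \<sigma>' \<Longrightarrow> (\<forall>i<nn. cbval b (ss i) \<and> exec c (ss i) (ss (Suc i)))
   \<Longrightarrow> \<not> cbval b (ss nn) \<Longrightarrow> exec (While b c) \<sigma> \<sigma>'"
proof (induction nn arbitrary: ss \<sigma>)
  case 0
  then show ?case by (auto intro: exec.WhileF)
next
  case (Suc nn)
  have "exec (While b c) (ss 1) \<sigma>'"
    using Suc.IH[of "\<lambda>i. ss (Suc i)"] Suc.prems by auto
  then show ?case using Suc.prems by (auto intro: exec.WhileT)
qed

lemma while_seq: "exec (While b c) \<sigma> \<sigma>' = (\<exists>nn ss. ss 0 = \<sigma> \<and> ss nn = \<sigma>' \<and>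
     (\<forall>i<nn. cbval b (ss i) \<and> exec c (ss i) (ss (Suc i))) \<and> \<not> cbval b (ss nn))"
  using while_seq1 while_seq2 by metis

lemma Rel_blk: "Rel V c (blk (length V) h h') = exec c (stu z0 V h) (stu z0 V h')"
proof -
  have "stu z0 V (blk (length V) h h') = stu z0 V h" by (rule stu_agree) (auto simp: blk_def)
  moreover have "stu z0 V (\<lambda>i. blk (length V) h h' (i + length V)) = stu z0 V h'"
    by (rule stu_agree) (auto simp: blk_def)
  ultimately show ?thesis unfolding Rel_def by simp
qed

lemma Rel_While:
  assumes d: "distinct V" and l: "locs (While b c) \<subseteq> set V"
  shows "Rel V (While b c) g = (\<exists>nn x. (\<forall>j<length V. x 0 j = g j) \<and> (\<forall>j<length V. x nn j = g (length V + j))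
     \<and> (\<forall>i<nn. cbval b (stu z0 V (x i)) \<and> Rel V c (blk (length V) (x i) (x (Suc i))))
     \<and> \<not> cbval b (stu z0 V (x nn)))" (is "?L = ?R")
proof
  let ?k = "length V"
  assume ?L
  then obtain nn ss where ss: "ss 0 = stu z0 V g" "ss nn = stu z0 V (\<lambda>i. g (i + ?k))"
     "\<forall>i<nn. cbval b (ss i) \<and> exec c (ss i) (ss (Suc i))" "\<not> cbval b (ss nn)"
    unfolding Rel_def while_seq by blast
  have fr: "\<forall>X. X \<notin> set V \<longrightarrow> ss i X = z0 X" if "i \<le> nn" for i
    using that
  proof (induction i)
    case 0 then show ?case using ss(1) by (auto simp: stu_def)
  next
    case (Suc i)
    hence "exec c (ss i) (ss (Suc i))" using ss(3) by auto
    then show ?case using Suc exec_frame l by fastforce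
  qed
  define x where "x = (\<lambda>i j. ss i (V ! j))"
  have sx: "ss i = stu z0 V (x i)" if "i \<le> nn" for i unfolding x_def using fr[OF that] by (rule stu_eq)
  show ?R
  proof (intro exI[of _ nn] exI[of _ x] conjI allI impI)
    fix j assume "j < ?k"
    thus "x 0 j = g j" unfolding x_def ss(1) using d by (simp add: stu_at)
    show "x nn j = g (?k + j)" unfolding x_def ss(2) using d \<open>j < ?k\<close> by (simp add: stu_at add.commute)
  next
    fix i assume "i < nn"
    thus "cbval b (stu z0 V (x i))" "Rel V c (blk ?k (x i) (x (Suc i)))"
      using ss(3) sx[of i] sx[of "Suc i"] by (auto simp: Rel_blk)
  next
    show "\<not> cbval b (stu z0 V (x nn))" using ss(4) sx[of nn] by simp
  qed
next
  let ?k = "length V"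
  assume ?R
  then obtain nn x where x: "\<forall>j<length V. x 0 j = g j" "\<forall>j<length V. x nn j = g (length V + j)"
     "\<forall>i<nn. cbval b (stu z0 V (x i)) \<and> Rel V c (blk (length V) (x i) (x (Suc i)))"
     "\<not> cbval b (stu z0 V (x nn))" by blast
  have "stu z0 V (x 0) = stu z0 V g" using x(1) by (intro stu_agree) auto
  moreover have "stu z0 V (x nn) = stu z0 V (\<lambda>i. g (i + ?k))" using x(2) by (intro stu_agree) (auto simp: add.commute)
  ultimately show ?L unfolding Rel_def while_seq using x(3,4)
    by (intro exI[of _ nn] exI[of _ "\<lambda>i. stu z0 V (x i)"]) (auto simp: Rel_blk)
qed

definition modr :: "int \<Rightarrow> int \<Rightarrow> int \<Rightarrow> bool" where
  "modr a m r \<longleftrightarrow> (\<exists>q. a = q * m + r \<and> 0 \<le> r \<and> r < m)"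

definition valr :: "int \<Rightarrow> int \<Rightarrow> int \<Rightarrow> int \<Rightarrow> int \<Rightarrow> int \<Rightarrow> bool" where
  "valr a b c d t v \<longleftrightarrow> (\<exists>r1 r2. modr a (1 + (t + 1) * b) r1 \<and> modr c (1 + (t + 1) * d) r2 \<and> v = r1 - r2)"

definition vv :: "int \<Rightarrow> int \<Rightarrow> int \<Rightarrow> int \<Rightarrow> int \<Rightarrow> int" where
  "vv a b c d t = a mod (1 + (t + 1) * b) - c mod (1 + (t + 1) * d)"

lemma modr_eq: "modr a m r \<Longrightarrow> r = a mod m"
  unfolding modr_def
proof (elim exE conjE)
  fix q assume h: "a = q * m + r" "0 \<le> r" "r < m"
  have "a mod m = (r + q * m) mod m" using h(1) by (simp add: add.commute)
  also have "\<dots> = r mod m" by (rule mod_mult_self1)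
  also have "\<dots> = r" using h(2,3) by (rule mod_pos_pos_trivial)
  finally show "r = a mod m" by simp
qed

lemma modr_intro: "0 < m \<Longrightarrow> modr a m (a mod m)"
  unfolding modr_def by (intro exI[of _ "a div m"]) simp

lemma valr_eq: "valr a b c d t v \<Longrightarrow> v = vv a b c d t"
  unfolding valr_def vv_def using modr_eq by blast

lemma beta_int: "\<exists>a b c d. \<forall>t<M. valr a b c d (int t) (x t)"
proof -
  obtain c1 d1 where 1: "\<forall>i<M. nat (max (x i) 0) = c1 mod (1 + (i+1)*d1)" using beta_nat[where M=M and a="\<lambda>i. nat (max (x i) 0)"] by auto
  obtain c2 d2 where 2: "\<forall>i<M. nat (max (- x i) 0) = c2 mod (1 + (i+1)*d2)" using beta_nat[where M=M and a="\<lambda>i. nat (max (- x i) 0)"] by auto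
  have "\<forall>t<M. valr (int c1) (int d1) (int c2) (int d2) (int t) (x t)"
  proof (intro allI impI)
    fix t assume t: "t < M"
    define m1 where "m1 = 1 + (int t + 1) * int d1"
    define m2 where "m2 = 1 + (int t + 1) * int d2"
    have e1: "int (1 + (t+1)*d1) = m1" unfolding m1_def by (simp add: algebra_simps)
    have e2: "int (1 + (t+1)*d2) = m2" unfolding m2_def by (simp add: algebra_simps)
    have p1: "0 < m1" unfolding m1_def by (simp add: add_pos_nonneg)
    have p2: "0 < m2" unfolding m2_def by (simp add: add_pos_nonneg)
    have a1: "int (nat (max (x t) 0)) = int c1 mod m1"
    proof -
      have "nat (max (x t) 0) = c1 mod (1 + (t+1)*d1)" using 1 t by blast
      hence "int (nat (max (x t) 0)) = int (c1 mod (1 + (t+1)*d1))" by (rule arg_cong)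
      also have "\<dots> = int c1 mod int (1 + (t+1)*d1)" by (rule of_nat_mod)
      finally show ?thesis unfolding e1 .
    qed
    have a2: "int (nat (max (- x t) 0)) = int c2 mod m2"
    proof -
      have "nat (max (- x t) 0) = c2 mod (1 + (t+1)*d2)" using 2 t by blast
      hence "int (nat (max (- x t) 0)) = int (c2 mod (1 + (t+1)*d2))" by (rule arg_cong)
      also have "\<dots> = int c2 mod int (1 + (t+1)*d2)" by (rule of_nat_mod)
      finally show ?thesis unfolding e2 .
    qed
    have xt: "x t = int (nat (max (x t) 0)) - int (nat (max (- x t) 0))"
      by (cases "x t \<ge> 0") simp_all
    have "x t = int c1 mod m1 - int c2 mod m2" using xt a1 a2 by linarith
    moreover have "modr (int c1) m1 (int c1 mod m1)" using p1 by (rule modr_intro)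
    moreover have "modr (int c2) m2 (int c2 mod m2)" using p2 by (rule modr_intro)
    ultimately have "\<exists>r1 r2. modr (int c1) m1 r1 \<and> modr (int c2) m2 r2 \<and> x t = r1 - r2" by blast
    thus "valr (int c1) (int d1) (int c2) (int d2) (int t) (x t)"
      unfolding valr_def m1_def m2_def .
  qed
  thus ?thesis by blast
qed

definition VV :: "nat \<Rightarrow> int \<Rightarrow> int \<Rightarrow> int \<Rightarrow> int \<Rightarrow> int \<Rightarrow> (nat \<Rightarrow> int) \<Rightarrow> bool" where
  "VV k a b c d t h \<longleftrightarrow> (\<forall>j<k. valr a b c d (t + int j) (h j))"

definition Enc :: "string list \<Rightarrow> cbexp \<Rightarrow> com \<Rightarrow> (nat \<Rightarrow> int) \<Rightarrow> bool" where
  "Enc V b c g \<longleftrightarrow> (\<exists>p0 p1 p2 p3 nn. 0 \<le> nn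
     \<and> VV (length V) p0 p1 p2 p3 0 g
     \<and> VV (length V) p0 p1 p2 p3 (nn * int (length V)) (\<lambda>j. g (length V + j))
     \<and> (\<forall>i. 0 \<le> i \<and> i < nn \<longrightarrow> (\<exists>H. VV (length V) p0 p1 p2 p3 (i * int (length V)) H
           \<and> VV (length V) p0 p1 p2 p3 (i * int (length V) + int (length V)) (\<lambda>j. H (length V + j))
           \<and> cbval b (stu z0 V H) \<and> Rel V c H))
     \<and> (\<exists>h. VV (length V) p0 p1 p2 p3 (nn * int (length V)) h \<and> \<not> cbval b (stu z0 V h)))"

lemma cb_agree: "(\<forall>j<length V. h j = h' j) \<Longrightarrow> cbval b (stu z0 V h) = cbval b (stu z0 V h')"
  by (simp add: stu_agree[of V h h'])

lemma Enc_iff: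
  "(\<exists>nn x. (\<forall>j<length V. x 0 j = g j) \<and> (\<forall>j<length V. x nn j = g (length V + j))
     \<and> (\<forall>i<nn. cbval b (stu z0 V (x i)) \<and> Rel V c (blk (length V) (x i) (x (Suc i))))
     \<and> \<not> cbval b (stu z0 V (x nn))) = Enc V b c g" (is "?L = ?R")
proof
  let ?k = "length V"
  assume ?L
  then obtain nn x where x: "\<forall>j<?k. x 0 j = g j" "\<forall>j<?k. x nn j = g (?k + j)"
     "\<forall>i<nn. cbval b (stu z0 V (x i)) \<and> Rel V c (blk ?k (x i) (x (Suc i)))"
     "\<not> cbval b (stu z0 V (x nn))" by blast
  define y where "y = (\<lambda>t. x (t div ?k) (t mod ?k))"
  obtain p0 p1 p2 p3 where p: "\<forall>t<(nn+1)*?k. valr p0 p1 p2 p3 (int t) (y t)"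
    using beta_int by blast
  have key: "VV ?k p0 p1 p2 p3 (int i * int ?k) (x i)" if "i \<le> nn" for i
    unfolding VV_def
  proof (intro allI impI)
    fix j assume j: "j < ?k"
    have "i * ?k + j < i * ?k + ?k" using j by simp
    also have "\<dots> = (i + 1) * ?k" by simp
    also have "\<dots> \<le> (nn+1) * ?k" using that by (intro mult_le_mono1) simp
    finally have "i * ?k + j < (nn+1) * ?k" .
    hence "valr p0 p1 p2 p3 (int (i * ?k + j)) (y (i * ?k + j))" using p by blast
    moreover have "y (i * ?k + j) = x i j"
    proof -
      have k0: "?k \<noteq> 0" using j by linarith
      have "(i * ?k + j) div ?k = i" using j k0 by (simp add: add.commute[of "i * ?k"])
      moreover have "(i * ?k + j) mod ?k = j" using j by simp
      ultimately show ?thesis unfolding y_def by simp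
    qed
    ultimately show "valr p0 p1 p2 p3 (int i * int ?k + int j) (x i j)" by simp
  qed
  show ?R unfolding Enc_def
  proof (rule exI[of _ p0], rule exI[of _ p1], rule exI[of _ p2], rule exI[of _ p3], rule exI[of _ "int nn"], intro conjI allI impI)
    show "VV ?k p0 p1 p2 p3 0 g" using key[of 0] x(1) by (simp add: VV_def)
    show "VV ?k p0 p1 p2 p3 (int nn * int ?k) (\<lambda>j. g (?k + j))" using key[of nn] x(2) by (simp add: VV_def)
    show "\<exists>h. VV ?k p0 p1 p2 p3 (int nn * int ?k) h \<and> \<not> cbval b (stu z0 V h)"
      using key[of nn] x(4) by blast
  next
    fix i :: int assume i: "0 \<le> i \<and> i < int nn"
    then obtain i' where i': "i = int i'" "i' < nn" by (metis nonneg_int_cases of_nat_less_iff)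
    have "VV ?k p0 p1 p2 p3 (i * int ?k + int ?k) (\<lambda>j. blk ?k (x i') (x (Suc i')) (?k + j))"
      using key[of "Suc i'"] i' by (simp add: blk_def algebra_simps)
    moreover have "VV ?k p0 p1 p2 p3 (i * int ?k) (blk ?k (x i') (x (Suc i')))"
      using key[of i'] i' by (simp add: VV_def blk_def)
    moreover have "cbval b (stu z0 V (blk ?k (x i') (x (Suc i'))))"
      using x(3) i' cb_agree[of V "blk ?k (x i') (x (Suc i'))" "x i'" b] by (simp add: blk_def)
    ultimately show "\<exists>H. VV ?k p0 p1 p2 p3 (i * int ?k) H
           \<and> VV ?k p0 p1 p2 p3 (i * int ?k + int ?k) (\<lambda>j. H (?k + j))
           \<and> cbval b (stu z0 V H) \<and> Rel V c H" using x(3) i' by blast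
  qed simp
next
  let ?k = "length V"
  assume ?R
  then obtain p0 p1 p2 p3 nn where e: "0 \<le> nn"
     "VV ?k p0 p1 p2 p3 0 g"
     "VV ?k p0 p1 p2 p3 (nn * int ?k) (\<lambda>j. g (?k + j))"
     "\<forall>i. 0 \<le> i \<and> i < nn \<longrightarrow> (\<exists>H. VV ?k p0 p1 p2 p3 (i * int ?k) H
           \<and> VV ?k p0 p1 p2 p3 (i * int ?k + int ?k) (\<lambda>j. H (?k + j))
           \<and> cbval b (stu z0 V H) \<and> Rel V c H)"
     "\<exists>h. VV ?k p0 p1 p2 p3 (nn * int ?k) h \<and> \<not> cbval b (stu z0 V h)"
    unfolding Enc_def by blast
  define x where "x = (\<lambda>i j. vv p0 p1 p2 p3 (int i * int ?k + int j))"
  have VVx: "VV ?k p0 p1 p2 p3 (int i * int ?k) h \<Longrightarrow> \<forall>j<?k. h j = x i j" for i h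
    unfolding VV_def x_def using valr_eq by blast
  obtain nn' where nn': "nn = int nn'" using e(1) nonneg_int_cases by blast
  show ?L
  proof (intro exI[of _ nn'] exI[of _ x] conjI allI impI)
    fix j assume "j < ?k"
    thus "x 0 j = g j" using VVx[of 0 g] e(2) by simp
    show "x nn' j = g (?k + j)" using VVx[of nn' "\<lambda>j. g (?k + j)"] e(3) nn' \<open>j < ?k\<close> by simp
  next
    fix i assume i: "i < nn'"
    then obtain H where H: "VV ?k p0 p1 p2 p3 (int i * int ?k) H"
           "VV ?k p0 p1 p2 p3 (int i * int ?k + int ?k) (\<lambda>j. H (?k + j))"
           "cbval b (stu z0 V H)" "Rel V c H" using e(4)[rule_format, of "int i"] nn' i by auto
    have h1: "\<forall>j<?k. H j = x i j" using VVx H(1) by blast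
    have "int (Suc i) * int ?k = int i * int ?k + int ?k" by (simp add: algebra_simps)
    hence h2: "\<forall>j<?k. H (?k + j) = x (Suc i) j" using VVx[of "Suc i"] H(2) by auto
    show "cbval b (stu z0 V (x i))" using H(3) h1 cb_agree[of V H "x i" b] by simp
    have "Rel V c (blk ?k (x i) (x (Suc i))) = Rel V c H"
    proof (rule Rel_supp, intro allI impI)
      fix j assume "j < 2 * ?k"
      thus "blk ?k (x i) (x (Suc i)) j = H j" using h1 h2[rule_format, of "j - ?k"] by (auto simp: blk_def)
    qed
    thus "Rel V c (blk ?k (x i) (x (Suc i)))" using H(4) by simp
  next
    obtain h where "VV ?k p0 p1 p2 p3 (nn * int ?k) h" "\<not> cbval b (stu z0 V h)" using e(5) by blast
    thus "\<not> cbval b (stu z0 V (x nn'))" using VVx[of nn' h] nn' cb_agree[of V h "x nn'" b] by simp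
  qed
qed

fun sh :: "tm \<Rightarrow> tm" where
  "sh (TC c) = TC c" | "sh (TV i) = TV (Suc i)"
| "sh (TAdd s t) = TAdd (sh s) (sh t)"
| "sh (TSub s t) = TSub (sh s) (sh t)"
| "sh (TMul s t) = TMul (sh s) (sh t)"

lemma tev_sh[simp]: "tev (sh t) (case_nat q f) = tev t f"
  by (induction t) auto

lemma fdef_lt: "fdef (\<lambda>f. tev s f < tev t f)"
proof -
  have "fdef (\<lambda>f. \<not> tev t f \<le> tev s f)" by (intro fdef_not fdef_le)
  thus ?thesis by (rule fdef_cong) auto
qed

lemma fdef_modr: "fdef (\<lambda>f. modr (tev a f) (tev m f) (tev r f))"
proof -
  have "fdef (\<lambda>G. tev (sh a) G = tev (TAdd (TMul (TV 0) (sh m)) (sh r)) G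
       \<and> tev (TC 0) G \<le> tev (sh r) G \<and> tev (sh r) G < tev (sh m) G)"
    by (intro fdef_and fdef_eq fdef_le fdef_lt)
  hence "fdef (\<lambda>f. \<exists>q. (\<lambda>G. tev (sh a) G = tev (TAdd (TMul (TV 0) (sh m)) (sh r)) G
       \<and> tev (TC 0) G \<le> tev (sh r) G \<and> tev (sh r) G < tev (sh m) G) (case_nat q f))"
    by (rule fdef_ex1)
  thus ?thesis by (rule fdef_cong) (simp add: modr_def)
qed

lemma fdef_valr: "fdef (\<lambda>f. valr (tev a f) (tev b f) (tev c f) (tev d f) (tev t f) (tev v f))"
proof -
  let ?a = "sh (sh a)" and ?b = "sh (sh b)" and ?c = "sh (sh c)" and ?d = "sh (sh d)"
    and ?t = "sh (sh t)" and ?v = "sh (sh v)"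
  let ?I = "\<lambda>H. modr (tev ?a H) (tev (TAdd (TC 1) (TMul (TAdd ?t (TC 1)) ?b)) H) (tev (TV (Suc 0)) H)
     \<and> modr (tev ?c H) (tev (TAdd (TC 1) (TMul (TAdd ?t (TC 1)) ?d)) H) (tev (TV 0) H)
     \<and> tev ?v H = tev (TSub (TV (Suc 0)) (TV 0)) H"
  have "fdef ?I" by (intro fdef_and fdef_modr fdef_eq)
  hence "fdef (\<lambda>G. \<exists>r2. ?I (case_nat r2 G))" by (rule fdef_ex1)
  hence "fdef (\<lambda>f. \<exists>r1. (\<lambda>G. \<exists>r2. ?I (case_nat r2 G)) (case_nat r1 f))" by (rule fdef_ex1)
  thus ?thesis by (rule fdef_cong) (auto simp: valr_def)
qed

lemma fdef_VV: "fdef (\<lambda>f. VV k (tev a f) (tev b f) (tev c f) (tev d f) (tev t f) (\<lambda>j. f (s + j)))"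
proof -
  have "fdef (\<lambda>f. \<forall>j<k. valr (tev a f) (tev b f) (tev c f) (tev d f) (tev (TAdd t (TC (int j))) f)
                     (tev (TV (s + j)) f))"
    by (intro fdef_ball fdef_valr)
  thus ?thesis by (rule fdef_cong) (simp add: VV_def)
qed

lemma VV_cong[cong]: "k = k' \<Longrightarrow> a = a' \<Longrightarrow> b = b' \<Longrightarrow> c = c' \<Longrightarrow> d = d' \<Longrightarrow> t = t' \<Longrightarrow>
   (\<And>j. j < k' \<Longrightarrow> h j = h' j) \<Longrightarrow> VV k a b c d t h = VV k' a' b' c' d' t' h'"
  unfolding VV_def by auto

lemma Rel_cong[cong]: "V = V' \<Longrightarrow> c = c' \<Longrightarrow> (\<And>i. i < 2 * length V' \<Longrightarrow> g i = g' i) \<Longrightarrow>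
   Rel V c g = Rel V' c' g'"
  using Rel_supp by blast

lemma stu_cong[cong]: "\<sigma> = \<sigma>' \<Longrightarrow> V = V' \<Longrightarrow> (\<And>i. i < length V' \<Longrightarrow> g i = g' i) \<Longrightarrow>
   stu \<sigma> V g = stu \<sigma>' V' g'"
  using stu_agree by blast

lemma fdef_Enc:
  assumes fc: "fdef (Rel V c)" and lb: "locb b \<subseteq> set V"
  shows "fdef (Enc V b c)"
proof -
  define k where "k = length V"
  have cbf: "fdef (\<lambda>g. cbval b (stu z0 V g))" using lb by (rule fdef_cb)
  define T where "T = (\<lambda>K. VV k (K (2*k+1)) (K (2*k+2)) (K (2*k+3)) (K (2*k+4)) (K (2*k) * int k) (\<lambda>j. K (0 + j))
      \<and> VV k (K (2*k+1)) (K (2*k+2)) (K (2*k+3)) (K (2*k+4)) (K (2*k) * int k + int k) (\<lambda>j. K (k + j))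
      \<and> cbval b (stu z0 V K) \<and> Rel V c K)"
  have fT: "fdef T"
  proof -
    have "fdef (\<lambda>K. VV k (tev (TV (2*k+1)) K) (tev (TV (2*k+2)) K) (tev (TV (2*k+3)) K) (tev (TV (2*k+4)) K)
                  (tev (TMul (TV (2*k)) (TC (int k))) K) (\<lambda>j. K (0 + j)))" by (rule fdef_VV)
    moreover have "fdef (\<lambda>K. VV k (tev (TV (2*k+1)) K) (tev (TV (2*k+2)) K) (tev (TV (2*k+3)) K) (tev (TV (2*k+4)) K)
                  (tev (TAdd (TMul (TV (2*k)) (TC (int k))) (TC (int k))) K) (\<lambda>j. K (k + j)))" by (rule fdef_VV)
    ultimately have "fdef (\<lambda>K. VV k (tev (TV (2*k+1)) K) (tev (TV (2*k+2)) K) (tev (TV (2*k+3)) K) (tev (TV (2*k+4)) K)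
                  (tev (TMul (TV (2*k)) (TC (int k))) K) (\<lambda>j. K (0 + j))
           \<and> VV k (tev (TV (2*k+1)) K) (tev (TV (2*k+2)) K) (tev (TV (2*k+3)) K) (tev (TV (2*k+4)) K)
                  (tev (TAdd (TMul (TV (2*k)) (TC (int k))) (TC (int k))) K) (\<lambda>j. K (k + j))
           \<and> cbval b (stu z0 V K) \<and> Rel V c K)"
      using cbf fc by (intro fdef_and) auto
    thus ?thesis unfolding T_def by (rule fdef_cong) simp
  qed
  have fS: "fdef (\<lambda>G. \<exists>H. T (blk (2*k) H G))" using fT by (rule fdef_exv)
  have "fdef (\<lambda>G. tev (TC 0) G \<le> tev (TV 0) G \<and> tev (TV 0) G < tev (TV 5) G \<longrightarrow> (\<exists>H. T (blk (2*k) H G)))"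
    using fS by (intro fdef_imp fdef_and fdef_le fdef_lt)
  hence "fdef (\<lambda>F. \<forall>i. (\<lambda>G. tev (TC 0) G \<le> tev (TV 0) G \<and> tev (TV 0) G < tev (TV 5) G \<longrightarrow> (\<exists>H. T (blk (2*k) H G))) (case_nat i F))"
    by (rule fdef_all1)
  hence fC3: "fdef (\<lambda>F. \<forall>i. 0 \<le> i \<and> i < F 4 \<longrightarrow> (\<exists>H. VV k (F 0) (F 1) (F 2) (F 3) (i * int k) H
           \<and> VV k (F 0) (F 1) (F 2) (F 3) (i * int k + int k) (\<lambda>j. H (k + j))
           \<and> cbval b (stu z0 V H) \<and> Rel V c H))"
    by (rule fdef_cong) (simp add: T_def blk_def k_def numeral_eq_Suc)
  define T' where "T' = (\<lambda>K. VV k (K (k+0)) (K (k+1)) (K (k+2)) (K (k+3)) (K (k+4) * int k) (\<lambda>j. K (0 + j))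
      \<and> \<not> cbval b (stu z0 V K))"
  have "fdef (\<lambda>K. VV k (tev (TV (k+0)) K) (tev (TV (k+1)) K) (tev (TV (k+2)) K) (tev (TV (k+3)) K)
                  (tev (TMul (TV (k+4)) (TC (int k))) K) (\<lambda>j. K (0 + j)) \<and> \<not> cbval b (stu z0 V K))"
    using cbf by (intro fdef_and fdef_not fdef_VV)
  hence "fdef T'" unfolding T'_def by (rule fdef_cong) simp
  hence "fdef (\<lambda>F. \<exists>h. T' (blk k h F))" by (rule fdef_exv)
  hence fC4: "fdef (\<lambda>F. \<exists>h. VV k (F 0) (F 1) (F 2) (F 3) (F 4 * int k) h \<and> \<not> cbval b (stu z0 V h))"
    by (rule fdef_cong) (simp add: T'_def blk_def k_def)
  define Q where "Q = (\<lambda>F. tev (TC 0) F \<le> tev (TV 4) F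
     \<and> VV k (tev (TV 0) F) (tev (TV 1) F) (tev (TV 2) F) (tev (TV 3) F) (tev (TC 0) F) (\<lambda>j. F (5 + j))
     \<and> VV k (tev (TV 0) F) (tev (TV 1) F) (tev (TV 2) F) (tev (TV 3) F) (tev (TMul (TV 4) (TC (int k))) F) (\<lambda>j. F ((5 + k) + j))
     \<and> (\<forall>i. 0 \<le> i \<and> i < F 4 \<longrightarrow> (\<exists>H. VV k (F 0) (F 1) (F 2) (F 3) (i * int k) H
           \<and> VV k (F 0) (F 1) (F 2) (F 3) (i * int k + int k) (\<lambda>j. H (k + j))
           \<and> cbval b (stu z0 V H) \<and> Rel V c H))
     \<and> (\<exists>h. VV k (F 0) (F 1) (F 2) (F 3) (F 4 * int k) h \<and> \<not> cbval b (stu z0 V h)))"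
  have "fdef Q" unfolding Q_def using fC3 fC4 by (intro fdef_and fdef_le fdef_VV) auto
  hence fQ: "fdef (\<lambda>g. \<exists>p. Q (blk 5 p g))" by (rule fdef_exv)
  have "(\<exists>p. Q (blk 5 p g)) = Enc V b c g" for g
  proof
    assume "\<exists>p. Q (blk 5 p g)"
    then obtain p where "Q (blk 5 p g)" by blast
    hence "0 \<le> p 4
     \<and> VV k (p 0) (p 1) (p 2) (p 3) 0 g
     \<and> VV k (p 0) (p 1) (p 2) (p 3) (p 4 * int k) (\<lambda>j. g (k + j))
     \<and> (\<forall>i. 0 \<le> i \<and> i < p 4 \<longrightarrow> (\<exists>H. VV k (p 0) (p 1) (p 2) (p 3) (i * int k) H
           \<and> VV k (p 0) (p 1) (p 2) (p 3) (i * int k + int k) (\<lambda>j. H (k + j))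
           \<and> cbval b (stu z0 V H) \<and> Rel V c H))
     \<and> (\<exists>h. VV k (p 0) (p 1) (p 2) (p 3) (p 4 * int k) h \<and> \<not> cbval b (stu z0 V h))"
      unfolding Q_def by (simp add: blk_def)
    thus "Enc V b c g" unfolding Enc_def k_def by blast
  next
    assume "Enc V b c g"
    then obtain p0 p1 p2 p3 nn where e: "0 \<le> nn
     \<and> VV k p0 p1 p2 p3 0 g
     \<and> VV k p0 p1 p2 p3 (nn * int k) (\<lambda>j. g (k + j))
     \<and> (\<forall>i. 0 \<le> i \<and> i < nn \<longrightarrow> (\<exists>H. VV k p0 p1 p2 p3 (i * int k) H
           \<and> VV k p0 p1 p2 p3 (i * int k + int k) (\<lambda>j. H (k + j))
           \<and> cbval b (stu z0 V H) \<and> Rel V c H))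
     \<and> (\<exists>h. VV k p0 p1 p2 p3 (nn * int k) h \<and> \<not> cbval b (stu z0 V h))"
      unfolding Enc_def k_def by blast
    define p where "p = (\<lambda>i::nat. if i = 0 then p0 else if i = 1 then p1 else if i = 2 then p2 else if i = 3 then p3 else nn)"
    have "Q (blk 5 p g)" using e unfolding Q_def by (simp add: blk_def p_def)
    thus "\<exists>p. Q (blk 5 p g)" by blast
  qed
  with fQ show ?thesis by (rule fdef_cong)
qed

declare stu_cong[cong del] VV_cong[cong del] Rel_cong[cong del]

lemma fdef_Rel: "distinct V \<Longrightarrow> locs c \<subseteq> set V \<Longrightarrow> fdef (Rel V c)"
proof (induction c)
  case Skip
  show ?case by (rule fdef_Skip[OF Skip.prems(1)])
next
  case (Assign X a)
  then show ?case by (intro fdef_Assign) auto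
next
  case (Seq c0 c1)
  hence "fdef (rcomp V c0 c1)" by (intro fdef_comp) auto
  thus ?case by (rule fdef_cong) (use Seq.prems in \<open>simp add: Rel_Seq\<close>)
next
  case (If b c0 c1)
  hence "fdef (\<lambda>g. (cbval b (stu z0 V g) \<and> Rel V c0 g) \<or> (\<not> cbval b (stu z0 V g) \<and> Rel V c1 g))"
    by (intro fdef_or fdef_and fdef_not fdef_cb) auto
  thus ?case by (rule fdef_cong) (simp add: Rel_If)
next
  case (While b c)
  hence "fdef (Enc V b c)" by (intro fdef_Enc) auto
  thus ?case by (rule fdef_cong) (use While.prems in \<open>simp add: Rel_While Enc_iff\<close>)
next
  case (Par c0 c1)
  hence "fdef (\<lambda>g. rcomp V c0 c1 g \<and> rcomp V c1 c0 g)" by (intro fdef_and fdef_comp) auto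
  thus ?case by (rule fdef_cong) (use Par.prems in \<open>simp add: Rel_Par\<close>)
qed

lemma exec_Rel:
  assumes d: "distinct V" and l: "locs c \<subseteq> set V"
  shows "exec c \<sigma> \<sigma>' = (\<exists>h. \<sigma>' = stu \<sigma> V h \<and> Rel V c (blk (length V) (\<lambda>i. \<sigma> (V ! i)) h))"
proof
  assume ex: "exec c \<sigma> \<sigma>'"
  define h where "h = (\<lambda>i. \<sigma>' (V ! i))"
  have "\<forall>X. X \<notin> set V \<longrightarrow> \<sigma>' X = \<sigma> X"
  proof (intro allI impI)
    fix X assume "X \<notin> set V"
    hence "X \<notin> locs c" using l by blast
    thus "\<sigma>' X = \<sigma> X" using exec_frame[OF ex] by simp
  qed
  hence e: "\<sigma>' = stu \<sigma> V h" unfolding h_def by (rule stu_eq)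
  let ?\<tau> = "stu z0 V (\<lambda>i. \<sigma> (V ! i))"
  have "\<forall>X\<in>set V. ?\<tau> X = \<sigma> X" by (simp add: stu_def nth_pos)
  hence "exec c ?\<tau> (\<lambda>X. if X \<in> set V then \<sigma>' X else ?\<tau> X)" using exec_local[OF ex l] by blast
  moreover have "(\<lambda>X. if X \<in> set V then \<sigma>' X else ?\<tau> X) = stu z0 V h"
    by (simp add: fun_eq_iff stu_def h_def nth_pos)
  ultimately have "Rel V c (blk (length V) (\<lambda>i. \<sigma> (V ! i)) h)" by (simp add: Rel_blk)
  thus "\<exists>h. \<sigma>' = stu \<sigma> V h \<and> Rel V c (blk (length V) (\<lambda>i. \<sigma> (V ! i)) h)" using e by blast
next
  assume "\<exists>h. \<sigma>' = stu \<sigma> V h \<and> Rel V c (blk (length V) (\<lambda>i. \<sigma> (V ! i)) h)"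
  then obtain h where e: "\<sigma>' = stu \<sigma> V h" and r: "Rel V c (blk (length V) (\<lambda>i. \<sigma> (V ! i)) h)" by blast
  let ?\<tau> = "stu z0 V (\<lambda>i. \<sigma> (V ! i))"
  have ex: "exec c ?\<tau> (stu z0 V h)" using r by (simp add: Rel_blk)
  have "\<forall>X\<in>set V. \<sigma> X = ?\<tau> X" by (simp add: stu_def nth_pos)
  hence "exec c \<sigma> (\<lambda>X. if X \<in> set V then stu z0 V h X else \<sigma> X)" using exec_local[OF ex l] by blast
  moreover have "(\<lambda>X. if X \<in> set V then stu z0 V h X else \<sigma> X) = stu \<sigma> V h"
    by (simp add: fun_eq_iff stu_def)
  ultimately show "exec c \<sigma> \<sigma>'" using e by simp
qed

fun allv :: "assn \<Rightarrow> string set" where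
  "allv ATrue = {}" | "allv AFalse = {}"
| "allv (AEq a b) = avars a \<union> avars b"
| "allv (ALe a b) = avars a \<union> avars b"
| "allv (ANot A) = allv A"
| "allv (AAnd A B) = allv A \<union> allv B"
| "allv (AOr A B) = allv A \<union> allv B"
| "allv (AImp A B) = allv A \<union> allv B"
| "allv (AForall x A) = insert x (allv A)"
| "allv (AExists x A) = insert x (allv A)"

lemma finite_allv: "finite (allv A)"
  by (induction A) auto

lemma aval_agree: "(\<forall>x\<in>avars e. J x = I x) \<Longrightarrow> aval e \<sigma> J = aval e \<sigma> I"
  by (induction e) auto

lemma sat_agree: "(\<forall>x\<in>allv A. J x = I x) \<Longrightarrow> sat \<sigma> J A = sat \<sigma> I A"
proof (induction A arbitrary: I J)
  case (AEq a b) then show ?case using aval_agree[of a J I \<sigma>] aval_agree[of b J I \<sigma>] by simp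
next
  case (ALe a b) then show ?case using aval_agree[of a J I \<sigma>] aval_agree[of b J I \<sigma>] by simp
next
  case (AForall x A)
  have "sat \<sigma> (J(x:=n)) A = sat \<sigma> (I(x:=n)) A" for n using AForall.prems by (intro AForall.IH) auto
  then show ?case by simp
next
  case (AExists x A)
  have "sat \<sigma> (J(x:=n)) A = sat \<sigma> (I(x:=n)) A" for n using AExists.prems by (intro AExists.IH) auto
  then show ?case by simp
next
  case (AAnd A1 A2)
  have "sat \<sigma> J A1 = sat \<sigma> I A1" "sat \<sigma> J A2 = sat \<sigma> I A2" using AAnd.prems by (intro AAnd.IH; auto)+
  then show ?case by simp
next
  case (AOr A1 A2)
  have "sat \<sigma> J A1 = sat \<sigma> I A1" "sat \<sigma> J A2 = sat \<sigma> I A2" using AOr.prems by (intro AOr.IH; auto)+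
  then show ?case by simp
next
  case (AImp A1 A2)
  have "sat \<sigma> J A1 = sat \<sigma> I A1" "sat \<sigma> J A2 = sat \<sigma> I A2" using AImp.prems by (intro AImp.IH; auto)+
  then show ?case by simp
qed simp_all

fun sla :: "string list \<Rightarrow> (nat \<Rightarrow> string) \<Rightarrow> aexp \<Rightarrow> aexp" where
  "sla V r (N n) = N n"
| "sla V r (L X) = (if X \<in> set V then IV (r (pos V X)) else L X)"
| "sla V r (IV x) = IV x"
| "sla V r (Plus a b) = Plus (sla V r a) (sla V r b)"
| "sla V r (Minus a b) = Minus (sla V r a) (sla V r b)"
| "sla V r (Times a b) = Times (sla V r a) (sla V r b)"

fun slb :: "string list \<Rightarrow> (nat \<Rightarrow> string) \<Rightarrow> assn \<Rightarrow> assn" where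
  "slb V r ATrue = ATrue" | "slb V r AFalse = AFalse"
| "slb V r (AEq a b) = AEq (sla V r a) (sla V r b)"
| "slb V r (ALe a b) = ALe (sla V r a) (sla V r b)"
| "slb V r (ANot A) = ANot (slb V r A)"
| "slb V r (AAnd A B) = AAnd (slb V r A) (slb V r B)"
| "slb V r (AOr A B) = AOr (slb V r A) (slb V r B)"
| "slb V r (AImp A B) = AImp (slb V r A) (slb V r B)"
| "slb V r (AForall x A) = AForall x (slb V r A)"
| "slb V r (AExists x A) = AExists x (slb V r A)"

lemma aval_sla: "aval (sla V r e) \<sigma> J = aval e (stu \<sigma> V (\<lambda>i. J (r i))) J"
  by (induction e) (auto simp: stu_def)

lemma sat_slb: "(\<forall>x\<in>allv A. x \<notin> range r) \<Longrightarrow> sat \<sigma> J (slb V r A) = sat (stu \<sigma> V (\<lambda>i. J (r i))) J A"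
proof (induction A arbitrary: J)
  case (AForall x A)
  have xr: "x \<notin> range r" using AForall.prems by simp
  have "(\<lambda>i. (J(x:=n)) (r i)) = (\<lambda>i. J (r i))" for n using xr by (simp add: fun_eq_iff) (metis rangeI)
  moreover have "sat \<sigma> (J(x:=n)) (slb V r A) = sat (stu \<sigma> V (\<lambda>i. (J(x:=n)) (r i))) (J(x:=n)) A" for n
    using AForall.prems by (intro AForall.IH) auto
  ultimately show ?case by simp
next
  case (AExists x A)
  have xr: "x \<notin> range r" using AExists.prems by simp
  have "(\<lambda>i. (J(x:=n)) (r i)) = (\<lambda>i. J (r i))" for n using xr by (simp add: fun_eq_iff) (metis rangeI)
  moreover have "sat \<sigma> (J(x:=n)) (slb V r A) = sat (stu \<sigma> V (\<lambda>i. (J(x:=n)) (r i))) (J(x:=n)) A" for n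
    using AExists.prems by (intro AExists.IH) auto
  ultimately show ?case by simp
qed (auto simp: aval_sla)

fun allb :: "(nat \<Rightarrow> string) \<Rightarrow> nat \<Rightarrow> assn \<Rightarrow> assn" where
  "allb r 0 A = A" | "allb r (Suc n) A = allb r n (AForall (r n) A)"

fun ovr :: "(nat \<Rightarrow> string) \<Rightarrow> interp \<Rightarrow> nat \<Rightarrow> (nat \<Rightarrow> int) \<Rightarrow> interp" where
  "ovr r J 0 h = J" | "ovr r J (Suc n) h = (ovr r J n h)(r n := h n)"

lemma ovr_cong: "(\<forall>i<n. h i = h' i) \<Longrightarrow> ovr r J n h = ovr r J n h'"
  by (induction n) auto

lemma sat_allb: "sat \<sigma> J (allb r n A) = (\<forall>h. sat \<sigma> (ovr r J n h) A)"
proof (induction n arbitrary: A)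
  case 0 then show ?case by simp
next
  case (Suc n)
  have "sat \<sigma> J (allb r (Suc n) A) = (\<forall>h a. sat \<sigma> ((ovr r J n h)(r n := a)) A)"
    by (simp add: Suc.IH)
  also have "\<dots> = (\<forall>h. sat \<sigma> ((ovr r J n h)(r n := h n)) A)"
  proof
    assume "\<forall>h a. sat \<sigma> ((ovr r J n h)(r n := a)) A" thus "\<forall>h. sat \<sigma> ((ovr r J n h)(r n := h n)) A" by blast
  next
    assume a: "\<forall>h. sat \<sigma> ((ovr r J n h)(r n := h n)) A"
    show "\<forall>h a. sat \<sigma> ((ovr r J n h)(r n := a)) A"
    proof (intro allI)
      fix h a
      have "ovr r J n (h(n := a)) = ovr r J n h" by (rule ovr_cong) auto
      thus "sat \<sigma> ((ovr r J n h)(r n := a)) A" using a[rule_format, of "h(n:=a)"] by simp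
    qed
  qed
  finally show ?case by (simp only: ovr.simps)
qed

lemma ovr_in: "inj r \<Longrightarrow> i < n \<Longrightarrow> ovr r J n h (r i) = h i"
  by (induction n) (auto simp: inj_eq less_Suc_eq)

lemma ovr_out: "x \<notin> range r \<Longrightarrow> ovr r J n h x = J x"
  by (induction n) auto

theorem expressive: "\<exists>w. \<forall>I. {\<sigma>. sat \<sigma> I w} = wp I c B"
proof -
  obtain V where V: "set V = locs c" "distinct V" using finite_distinct_list[OF finite_locs] by blast
  define k where "k = length V"
  define M where "M = Suc (\<Sum>x\<in>allv B. length x)"
  define r where "r = (\<lambda>i::nat. replicate (M + i) CHR ''x'')"
  have injr: "inj r" unfolding r_def inj_def by (metis add_left_cancel length_replicate)
  have fresh: "\<forall>x\<in>allv B. x \<notin> range r"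
  proof
    fix x assume x: "x \<in> allv B"
    have "length x \<le> (\<Sum>x\<in>allv B. length x)" using x finite_allv by (intro member_le_sum) auto
    hence "length x < M" unfolding M_def by simp
    thus "x \<notin> range r" unfolding r_def by auto
  qed
  define \<rho> where "\<rho> = (\<lambda>i. if i < k then L (V ! i) else IV (r (i - k)))"
  have "fdef (Rel V c)" using V by (intro fdef_Rel) auto
  then obtain A where A: "\<forall>\<sigma> I. sat \<sigma> I A = Rel V c (\<lambda>i. aval (\<rho> i) \<sigma> I)"
    unfolding fdef_def defn_def by blast
  define w where "w = allb r k (AImp A (slb V r B))"
  have "sat \<sigma> I w = (\<forall>\<sigma>'. exec c \<sigma> \<sigma>' \<longrightarrow> sat \<sigma>' I B)" for \<sigma> I
  proof -
    have "sat \<sigma> I w = (\<forall>h. sat \<sigma> (ovr r I k h) A \<longrightarrow> sat \<sigma> (ovr r I k h) (slb V r B))"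
      unfolding w_def sat_allb by simp
    also have "\<dots> = (\<forall>h. Rel V c (blk k (\<lambda>i. \<sigma> (V ! i)) h) \<longrightarrow> sat (stu \<sigma> V h) I B)"
    proof -
      have "sat \<sigma> (ovr r I k h) A = Rel V c (blk k (\<lambda>i. \<sigma> (V ! i)) h)" for h
        unfolding A[rule_format]
      proof (rule Rel_supp, intro allI impI)
        fix i assume "i < 2 * length V"
        thus "aval (\<rho> i) \<sigma> (ovr r I k h) = blk k (\<lambda>i. \<sigma> (V ! i)) h i"
          unfolding \<rho>_def blk_def k_def using ovr_in[OF injr, of "i - length V" "length V" I h] by auto
      qed
      moreover have "sat \<sigma> (ovr r I k h) (slb V r B) = sat (stu \<sigma> V h) I B" for h
      proof -
        have "sat \<sigma> (ovr r I k h) (slb V r B) = sat (stu \<sigma> V (\<lambda>i. ovr r I k h (r i))) (ovr r I k h) B"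
          using fresh by (rule sat_slb)
        also have "stu \<sigma> V (\<lambda>i. ovr r I k h (r i)) = stu \<sigma> V h"
          by (rule stu_agree) (simp add: ovr_in[OF injr] k_def)
        also have "sat (stu \<sigma> V h) (ovr r I k h) B = sat (stu \<sigma> V h) I B"
          using fresh by (intro sat_agree) (simp add: ovr_out)
        finally show ?thesis .
      qed
      ultimately show ?thesis by simp
    qed
    also have "\<dots> = (\<forall>\<sigma>'. exec c \<sigma> \<sigma>' \<longrightarrow> sat \<sigma>' I B)"
      using exec_Rel[of V c \<sigma>] V unfolding k_def by auto
    finally show ?thesis .
  qed
  thus ?thesis unfolding wp_def by blast
qed

theorem mainTheorem6:
  shows "\<forall>c B. \<exists>w. \<forall>I. {\<sigma>. sat \<sigma> I w} = wp I c B"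
  using expressive by blast

end
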